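(* Let $G$ be a finitely generated group, $(X,\mathcal{U})$ a first countable, locally compact, paracompact, Hausdorff uniform space, and $\Phi\in Act(G,X)$ an action with a proper expansive entourage $A$. For a non-empty finite set $F\subset G$ let $V_F(A)=\{(x,y)\in X\times X: (\Phi_g(x),\Phi_g(y))\in A \text{ for all } g\in F\}$. Then for any wide $U\in\mathcal{U}$ there exists a non-empty finite set $F\subset G$ with $V_F(A)\subset U$.
   Context: $X$ carries the topology induced by $\mathcal{U}$. $Act(G,X)$: maps $\Phi:G\times X\to X$ with each $\Phi_g$ a uniform equivalence, $\Phi_e=\mathrm{id}$, $\Phi_{g_1g_2}=\Phi_{g_1}\circ\Phi_{g_2}$. A closed entourage $A$ is an expansive entourage for $\Phi$ if for any distinct $x,y$ there is $g\in G$ with $(\Phi_g(x),\Phi_g(y))\notin A$. An entourage $M$ is proper if for every compact $K\subset X$ the set $M[K]=\bigcup_{x\in K}\{y:(x,y)\in M\}$ is compact. An entourage $U$ is wide if there is a compact $K\subset X$ with $U\cup(K\times X)=X\times X$. *)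

theory Defs
  imports "HOL-Analysis.Analysis" "HOL-Algebra.Generated_Groups"
begin

definition fin_gen_group :: "('g, 'b) monoid_scheme \<Rightarrow> bool" where
  "fin_gen_group G \<longleftrightarrow> group G \<and>
     (\<exists>S. finite S \<and> S \<subseteq> carrier G \<and> generate G S = carrier G)"

definition entourage :: "('a::uniform_space \<times> 'a) set \<Rightarrow> bool" where
  "entourage E \<longleftrightarrow> eventually (\<lambda>p. p \<in> E) uniformity"

definition uniform_equivalence :: "('a::uniform_space \<Rightarrow> 'a) \<Rightarrow> bool" where
  "uniform_equivalence f \<longleftrightarrow> bij f \<and> uniformly_continuous_on UNIV f
      \<and> uniformly_continuous_on UNIV (inv_into UNIV f)"

definition is_action :: "('g, 'b) monoid_scheme \<Rightarrow> ('g \<Rightarrow> 'a::uniform_space \<Rightarrow> 'a) \<Rightarrow> bool" where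
  "is_action G \<Phi> \<longleftrightarrow>
     (\<forall>g\<in>carrier G. uniform_equivalence (\<Phi> g)) \<and>
     \<Phi> \<one>\<^bsub>G\<^esub> = id \<and>
     (\<forall>g1\<in>carrier G. \<forall>g2\<in>carrier G. \<Phi> (g1 \<otimes>\<^bsub>G\<^esub> g2) = \<Phi> g1 \<circ> \<Phi> g2)"

definition expansive_entourage ::
  "('g, 'b) monoid_scheme \<Rightarrow> ('g \<Rightarrow> 'a::uniform_space \<Rightarrow> 'a) \<Rightarrow> ('a \<times> 'a) set \<Rightarrow> bool" where
  "expansive_entourage G \<Phi> A \<longleftrightarrow> entourage A \<and> closed A \<and>
     (\<forall>x y. x \<noteq> y \<longrightarrow> (\<exists>g\<in>carrier G. (\<Phi> g x, \<Phi> g y) \<notin> A))"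

(* M[K] = M `` K *)
definition proper_entourage :: "('a::uniform_space \<times> 'a) set \<Rightarrow> bool" where
  "proper_entourage M \<longleftrightarrow> entourage M \<and> (\<forall>K. compact K \<longrightarrow> compact (M `` K))"

definition wide_entourage :: "('a::uniform_space \<times> 'a) set \<Rightarrow> bool" where
  "wide_entourage U \<longleftrightarrow> entourage U \<and> (\<exists>K. compact K \<and> U \<union> (K \<times> UNIV) = UNIV)"

definition V_F :: "('g \<Rightarrow> 'a \<Rightarrow> 'a) \<Rightarrow> 'g set \<Rightarrow> ('a \<times> 'a) set \<Rightarrow> ('a \<times> 'a) set" where
  "V_F \<Phi> F A = {(x, y). \<forall>g\<in>F. (\<Phi> g x, \<Phi> g y) \<in> A}"

definition locally_compact :: "'a::topological_space itself \<Rightarrow> bool" where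
  "locally_compact _ \<longleftrightarrow> locally_compact_space (euclidean :: 'a topology)"

definition paracompact :: "'a::topological_space itself \<Rightarrow> bool" where
  "paracompact _ \<longleftrightarrow>
     (\<forall>\<C> :: 'a set set. (\<forall>C\<in>\<C>. open C) \<and> \<Union>\<C> = UNIV \<longrightarrow>
        (\<exists>\<D> :: 'a set set. (\<forall>D\<in>\<D>. open D) \<and> \<Union>\<D> = UNIV \<and>
           (\<forall>D\<in>\<D>. \<exists>C\<in>\<C>. D \<subseteq> C) \<and>
           (\<forall>x. \<exists>N. open N \<and> x \<in> N \<and> finite {D\<in>\<D>. D \<inter> N \<noteq> {}})))"

end

theory Submission
  imports Defs
begin

lemma diag_interior:
  fixes U :: "('a::uniform_space \<times> 'a) set"
  assumes "entourage U"
  shows "(x, x) \<in> interior U"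
proof -
  from assms have "eventually (\<lambda>p. p \<in> U) uniformity" by (simp add: entourage_def)
  then obtain D where D: "eventually D uniformity" "\<And>x y z. D (x, y) \<Longrightarrow> D (y, z) \<Longrightarrow> (x, z) \<in> U"
    by (rule uniformity_transE) auto
  have e1: "eventually (\<lambda>y. D (x, y)) (nhds x)"
    unfolding eventually_nhds_uniformity using D(1) by (rule eventually_mono) auto
  have "eventually (\<lambda>(x, y). D (y, x)) uniformity" using D(1) by (rule uniformity_sym)
  hence e2: "eventually (\<lambda>y. D (y, x)) (nhds x)"
    unfolding eventually_nhds_uniformity by (rule eventually_mono) auto
  from e1 e2 have "eventually (\<lambda>y. D (x, y) \<and> D (y, x)) (nhds x)" by (rule eventually_conj)
  then obtain N where N: "open N" "x \<in> N" "\<And>y. y \<in> N \<Longrightarrow> D (x, y) \<and> D (y, x)"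
    unfolding eventually_nhds by blast
  have "N \<times> N \<subseteq> U" using N(3) D(2) by blast
  moreover have "open (N \<times> N)" by (rule open_Times[OF N(1) N(1)])
  ultimately show ?thesis using N(2) by (meson SigmaI interior_maximal subsetD)
qed

theorem lemma3p5:
  fixes G :: "('g, 'b) monoid_scheme"
    and \<Phi> :: "'g \<Rightarrow> 'a::{uniform_space, first_countable_topology, t2_space} \<Rightarrow> 'a"
    and A U :: "('a \<times> 'a) set"
  assumes "fin_gen_group G"
    and "locally_compact TYPE('a)"
    and "paracompact TYPE('a)"
    and "is_action G \<Phi>"
    and "expansive_entourage G \<Phi> A"
    and "proper_entourage A"
    and "wide_entourage U"
  shows "\<exists>F. finite F \<and> F \<noteq> {} \<and> F \<subseteq> carrier G \<and> V_F \<Phi> F A \<subseteq> U"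
proof -
  have grp: "group G" using assms(1) by (simp add: fin_gen_group_def)
  obtain K where K: "compact K" "U \<union> (K \<times> UNIV) = UNIV" "entourage U"
    using assms(7) by (auto simp: wide_entourage_def)
  have AK: "compact (A `` K)" using assms(6) K(1) by (simp add: proper_entourage_def)
  have Acl: "closed A" and expA: "\<And>x y. x \<noteq> y \<Longrightarrow> \<exists>g\<in>carrier G. (\<Phi> g x, \<Phi> g y) \<notin> A"
    using assms(5) by (auto simp: expansive_entourage_def)
  define C where "C = (K \<times> A `` K) - interior U"
  have Cc: "compact C" unfolding C_def
    by (rule compact_diff) (auto intro: compact_Times K(1) AK)
  define W where "W g = (\<lambda>p. (\<Phi> g (fst p), \<Phi> g (snd p))) -` (- A)" for g
  have Wo: "open (W g)" if "g \<in> carrier G" for g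
  proof -
    have "uniformly_continuous_on UNIV (\<Phi> g)"
      using assms(4) that by (auto simp: is_action_def uniform_equivalence_def)
    hence c: "continuous_on UNIV (\<Phi> g)" by (rule uniformly_continuous_imp_continuous)
    have "continuous_on UNIV (\<lambda>p. (\<Phi> g (fst p), \<Phi> g (snd p)))"
      by (intro continuous_on_Pair continuous_on_compose2[OF c] continuous_on_fst continuous_on_snd continuous_on_id) auto
    hence "closed ((\<lambda>p. (\<Phi> g (fst p), \<Phi> g (snd p))) -` A \<inter> UNIV)"
      using Acl continuous_on_closed_vimage[OF closed_UNIV] by blast
    hence cl: "closed ((\<lambda>p. (\<Phi> g (fst p), \<Phi> g (snd p))) -` A)" by simp
    have "W g = - ((\<lambda>p. (\<Phi> g (fst p), \<Phi> g (snd p))) -` A)" unfolding W_def by auto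
    thus ?thesis using cl by auto
  qed
  have cov: "C \<subseteq> \<Union> (W ` carrier G)"
  proof
    fix p assume "p \<in> C"
    then obtain x y where p: "p = (x, y)" "(x, y) \<notin> interior U" by (cases p) (auto simp: C_def)
    have "x \<noteq> y" using p(2) diag_interior[OF K(3)] by auto
    then obtain g where "g \<in> carrier G" "(\<Phi> g x, \<Phi> g y) \<notin> A" using expA by blast
    thus "p \<in> \<Union> (W ` carrier G)" using p by (auto simp: W_def)
  qed
  have "\<And>B. B \<in> W ` carrier G \<Longrightarrow> open B" using Wo by blast
  then obtain T where T: "T \<subseteq> W ` carrier G" "finite T" "C \<subseteq> \<Union> T"
    by (rule compactE[OF Cc cov])
  obtain F0 where F0: "F0 \<subseteq> carrier G" "finite F0" "T = W ` F0"
    using T(1,2) by (meson finite_subset_image)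
  define F where "F = insert \<one>\<^bsub>G\<^esub> F0"
  have one: "\<Phi> \<one>\<^bsub>G\<^esub> = id" using assms(4) by (simp add: is_action_def)
  have "V_F \<Phi> F A \<subseteq> U"
  proof
    fix p assume pV: "p \<in> V_F \<Phi> F A"
    obtain x y where p: "p = (x, y)" by (cases p)
    show "p \<in> U"
    proof (rule ccontr)
      assume nU: "p \<notin> U"
      hence xK: "x \<in> K" using K(2) p by blast
      have "(x, y) \<in> A" using pV p one by (auto simp: V_F_def F_def)
      hence "y \<in> A `` K" using xK by blast
      moreover have "p \<notin> interior U" using nU interior_subset by blast
      ultimately have "p \<in> C" using xK p by (auto simp: C_def)
      then obtain g where "g \<in> F0" "p \<in> W g" using T(3) F0(3) by blast
      thus False using pV p by (auto simp: V_F_def F_def W_def)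
    qed
  qed
  moreover have "F \<subseteq> carrier G" using F0(1) grp by (simp add: F_def group.is_monoid monoid.one_closed)
  ultimately show ?thesis using F0(2) unfolding F_def by blast
qed

end
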